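(* There is an absolute constant $C_1>0$ such that the following holds. Let $n\ge 2$, $p\ge 1$, $d\ge 1$, let $(x_1,y_1),\ldots,(x_n,y_n)\in \mathbb{S}^{d-1}\times\{-1,1\}$ be any dataset and let $\theta^{(1)}$ be any initial parameter vector. Set $h=1/p$, $L_1:=L(\theta^{(1)})$, and \[ \widetilde{Q}_1=\min\left\{\frac{1}{30pL_1\log^2(1/L_1)},\ \frac{108\,\lVert V^{(1)}\rVert^2}{125\,L_1\log^4(1/L_1)},\ \frac{e^2}{120p}\right\},\qquad \widetilde{Q}_2(Q_1)=\frac{125\,Q_1L_1\log^4(1/L_1)}{216\,\lVert V^{(1)}\rVert^2}. \] Let $Q_1$ be any positive number with $Q_1\le \widetilde{Q}_1$ and $Q_2$ any positive number with $Q_2\le\widetilde{Q}_2(Q_1)$. Let $\theta^{(t+1)}=\theta^{(t)}-\alpha_t\nabla_\theta L(\theta^{(t)})$ for $t\ge 1$ with step-sizes $\alpha_t=Q_1\log^2(1/L(\theta^{(t)}))$. If $L(\theta^{(1)})\le \frac{1}{n^{1+C_1}}$, then for all $t\ge 1$, \[ L(\theta^{(t)})\le \frac{L(\theta^{(1)})}{Q_2\,(t-1)+1}. \]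
   Context: $\mathbb{S}^{d-1}$ is the set of unit vectors in $\mathbb{R}^d$; $\log$ is the natural logarithm. The Huberized ReLU with bandwidth $h>0$ is $\phi(z)=0$ for $z<0$, $\phi(z)=z^2/(2h)$ for $z\in[0,h]$, $\phi(z)=z-h/2$ for $z>h$. The network has $2p$ hidden units with input weights $v_i\in\mathbb{R}^d$ and biases $b_i\in\mathbb{R}$, $i\in[2p]$; the output weights are fixed (not trained): $u_1=\cdots=u_p=1$, $u_{p+1}=\cdots=u_{2p}=-1$. The trainable parameters are $\theta=(v_1,b_1,\ldots,v_{2p},b_{2p})$ and the network computes $f_\theta(x)=\sum_{i=1}^{2p}u_i\phi(v_i\cdot x+b_i)$. The training loss is $L(\theta)=\frac1n\sum_{s=1}^n\ln(1+\exp(-y_sf_\theta(x_s)))$. $V^{(1)}$ denotes the $2p\times(d+1)$ matrix whose $i$-th row is $(v_i^{(1)},b_i^{(1)})$ formed from the parameters $\theta^{(1)}$, and $\lVert V^{(1)}\rVert$ is its Frobenius norm. *)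

theory Defs
  imports "HOL-Analysis.Analysis"
begin

text \<open>Parameters theta are encoded as a function theta i j :: real, where for a hidden
unit i < 2p the entries j < d are the input weights v_i and entry j = d is the bias b_i.\<close>

definition huber :: "real \<Rightarrow> real \<Rightarrow> real" where
  "huber h z = (if z < 0 then 0 else if z \<le> h then z\<^sup>2 / (2 * h) else z - h / 2)"

definition outw :: "nat \<Rightarrow> nat \<Rightarrow> real" where
  "outw p i = (if i < p then 1 else -1)"

definition net :: "nat \<Rightarrow> nat \<Rightarrow> real \<Rightarrow> (nat \<Rightarrow> nat \<Rightarrow> real) \<Rightarrow> (nat \<Rightarrow> real) \<Rightarrow> real" where
  "net p d h \<theta> x = (\<Sum>i<2*p. outw p i * huber h ((\<Sum>j<d. \<theta> i j * x j) + \<theta> i d))"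

definition loss :: "nat \<Rightarrow> nat \<Rightarrow> nat \<Rightarrow> real \<Rightarrow> (nat \<Rightarrow> nat \<Rightarrow> real) \<Rightarrow> (nat \<Rightarrow> real)
    \<Rightarrow> (nat \<Rightarrow> nat \<Rightarrow> real) \<Rightarrow> real" where
  "loss n p d h X Y \<theta> = (1 / real n) * (\<Sum>s<n. ln (1 + exp (- (Y s) * net p d h \<theta> (X s))))"

text \<open>Partial derivative of a function of the parameters with respect to entry (i,j);
the gradient of L is the array of these partial derivatives (L is C^1).\<close>
definition partial :: "((nat \<Rightarrow> nat \<Rightarrow> real) \<Rightarrow> real) \<Rightarrow> (nat \<Rightarrow> nat \<Rightarrow> real) \<Rightarrow> nat \<Rightarrow> nat \<Rightarrow> real" where
  "partial F \<theta> i j = deriv (\<lambda>s. F (\<theta>(i := (\<theta> i)(j := s)))) (\<theta> i j)"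

text \<open>Frobenius norm of the 2p x (d+1) matrix V whose i-th row is (v_i, b_i).\<close>
definition frob :: "nat \<Rightarrow> nat \<Rightarrow> (nat \<Rightarrow> nat \<Rightarrow> real) \<Rightarrow> real" where
  "frob p d \<theta> = sqrt (\<Sum>i<2*p. \<Sum>j\<le>d. (\<theta> i j)\<^sup>2)"

definition Qt1 :: "nat \<Rightarrow> real \<Rightarrow> real \<Rightarrow> real" where
  "Qt1 p L1 V = Min {1 / (30 * real p * L1 * (ln (1 / L1))\<^sup>2),
                      108 * V\<^sup>2 / (125 * L1 * (ln (1 / L1)) ^ 4),
                      exp 2 / (120 * real p)}"

definition Qt2 :: "real \<Rightarrow> real \<Rightarrow> real \<Rightarrow> real" where
  "Qt2 Q1 L1 V = 125 * Q1 * L1 * (ln (1 / L1)) ^ 4 / (216 * V\<^sup>2)"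

end

theory Submission
  imports Defs
begin


definition xt :: "nat \<Rightarrow> (nat \<Rightarrow> real) \<Rightarrow> nat \<Rightarrow> real" where
  "xt d x j = (if j < d then x j else if j = d then 1 else 0)"

definition zz :: "nat \<Rightarrow> (nat \<Rightarrow> nat \<Rightarrow> real) \<Rightarrow> nat \<Rightarrow> (nat \<Rightarrow> real) \<Rightarrow> real" where
  "zz d \<theta> i x = (\<Sum>j\<le>d. \<theta> i j * xt d x j)"

definition hder :: "real \<Rightarrow> real \<Rightarrow> real" where
  "hder h z = (if z < 0 then 0 else if z \<le> h then z / h else 1)"

definition lg :: "real \<Rightarrow> real" where "lg m = ln (1 + exp (- m))"
definition qq :: "real \<Rightarrow> real" where "qq m = exp (- m) / (1 + exp (- m))"

lemma zz_eq: "(\<Sum>j<d. \<theta> i j * x j) + \<theta> i d = zz d \<theta> i x"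
  unfolding zz_def xt_def lessThan_Suc_atMost[symmetric] by (simp add: sum.lessThan_Suc)

lemma net_zz: "net p d h \<theta> x = (\<Sum>i<2*p. outw p i * huber h (zz d \<theta> i x))"
  unfolding net_def zz_eq ..

lemma DERIV_glue:
  fixes f ga gb :: "real \<Rightarrow> real"
  assumes d1: "(ga has_real_derivative D) (at a)" and d2: "(gb has_real_derivative D) (at a)"
    and r: "r > 0"
    and e1: "\<And>z. z \<le> a \<Longrightarrow> z > a - r \<Longrightarrow> f z = ga z"
    and e2: "\<And>z. z \<ge> a \<Longrightarrow> z < a + r \<Longrightarrow> f z = gb z"
  shows "(f has_real_derivative D) (at a)"
proof -
  have t1: "((\<lambda>z. (ga z - ga a) / (z - a)) \<longlongrightarrow> D) (at_left a)"
    using d1 unfolding has_field_derivative_iff by (rule filterlim_mono) (auto simp: at_le)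
  have t2: "((\<lambda>z. (gb z - gb a) / (z - a)) \<longlongrightarrow> D) (at_right a)"
    using d2 unfolding has_field_derivative_iff by (rule filterlim_mono) (auto simp: at_le)
  have l: "((\<lambda>z. (f z - f a) / (z - a)) \<longlongrightarrow> D) (at_left a)"
  proof (rule tendsto_cong[THEN iffD1, OF _ t1])
    have "eventually (\<lambda>z. z \<in> {a-r<..<a}) (at_left a)" using r by (intro eventually_at_left_real) simp
    then show "\<forall>\<^sub>F z in at_left a. (ga z - ga a) / (z - a) = (f z - f a) / (z - a)"
      by eventually_elim (simp add: e1 e1[of a])
  qed
  have r: "((\<lambda>z. (f z - f a) / (z - a)) \<longlongrightarrow> D) (at_right a)"
  proof (rule tendsto_cong[THEN iffD1, OF _ t2])
    have "eventually (\<lambda>z. z \<in> {a<..<a+r}) (at_right a)" using r by (intro eventually_at_right_real) simp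
    then show "\<forall>\<^sub>F z in at_right a. (gb z - gb a) / (z - a) = (f z - f a) / (z - a)"
      by eventually_elim (simp add: e2 e2[of a])
  qed
  show ?thesis unfolding has_field_derivative_iff using l r by (simp add: filterlim_at_split)
qed

lemma huber_deriv:
  assumes h: "h > 0"
  shows "(huber h has_real_derivative hder h z) (at z)"
proof -
  have q: "((\<lambda>w. w\<^sup>2 / (2 * h)) has_real_derivative z / h) (at z)"
    using h by (auto intro!: derivative_eq_intros simp: field_simps)
  have l: "((\<lambda>w. w - h / 2) has_real_derivative 1) (at z)"
    by (auto intro!: derivative_eq_intros)
  consider "z < 0" | "z = 0" | "0 < z" "z < h" | "z = h" | "z > h" by linarith
  then show ?thesis
  proof cases
    case 1
    have "eventually (\<lambda>w. w \<in> {..<0}) (nhds z)" using 1 by (intro eventually_nhds_in_open) auto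
    then have "eventually (\<lambda>w. huber h w = 0) (nhds z)" by eventually_elim (simp add: huber_def)
    then show ?thesis using 1 by (subst DERIV_cong_ev[OF refl _ refl]) (auto simp: hder_def)
  next
    case 2
    show ?thesis
    proof (rule DERIV_glue[where ga="\<lambda>w. 0" and gb="\<lambda>w. w\<^sup>2 / (2 * h)" and r=h])
      show "((\<lambda>w. w\<^sup>2 / (2 * h)) has_real_derivative hder h z) (at z)" using q 2 h by (simp add: hder_def)
    qed (use 2 h in \<open>auto simp: hder_def huber_def\<close>)
  next
    case 3
    have "eventually (\<lambda>w. w \<in> {0<..<h}) (nhds z)" using 3 by (intro eventually_nhds_in_open) auto
    then have "eventually (\<lambda>w. huber h w = w\<^sup>2 / (2 * h)) (nhds z)" by eventually_elim (simp add: huber_def)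
    then show ?thesis using 3 q by (subst DERIV_cong_ev[OF refl _ refl]) (auto simp: hder_def)
  next
    case 4
    show ?thesis
    proof (rule DERIV_glue[where ga="\<lambda>w. w\<^sup>2 / (2 * h)" and gb="\<lambda>w. w - h / 2" and r=h])
      show "((\<lambda>w. w\<^sup>2 / (2 * h)) has_real_derivative hder h z) (at z)" using q 4 h by (simp add: hder_def)
      show "((\<lambda>w. w - h / 2) has_real_derivative hder h z) (at z)" using l 4 h by (simp add: hder_def)
    qed (use 4 h in \<open>auto simp: hder_def huber_def power2_eq_square field_simps\<close>)
  next
    case 5
    have "eventually (\<lambda>w. w \<in> {h<..}) (nhds z)" using 5 by (intro eventually_nhds_in_open) auto
    then have "eventually (\<lambda>w. huber h w = w - h / 2) (nhds z)" by eventually_elim (use h in \<open>simp add: huber_def\<close>)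
    then show ?thesis using 5 l h by (subst DERIV_cong_ev[OF refl _ refl]) (auto simp: hder_def)
  qed
qed

lemma huber_deriv_chain [derivative_intros]:
  assumes "h > 0" "(f has_real_derivative f') (at x within S)"
  shows "((\<lambda>x. huber h (f x)) has_real_derivative hder h (f x) * f') (at x within S)"
  using DERIV_chain2[OF huber_deriv[OF assms(1)] assms(2)] .

lemma sum_upd: "finite A \<Longrightarrow> (\<Sum>k\<in>A. ((f::'a \<Rightarrow> real)(j := s)) k * g k) = (\<Sum>k\<in>A. f k * g k) + (if j \<in> A then (s - f j) * g j else 0)"
proof -
  assume A: "finite A"
  have "(\<Sum>k\<in>A. (f(j := s)) k * g k) = (\<Sum>k\<in>A. f k * g k + (if k = j then (s - f j) * g j else 0))"
  proof (rule sum.cong)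
    fix k assume "k \<in> A"
    show "(f(j := s)) k * g k = f k * g k + (if k = j then (s - f j) * g j else 0)"
      by (cases "k = j") (simp_all add: algebra_simps)
  qed simp
  also have "\<dots> = (\<Sum>k\<in>A. f k * g k) + (if j \<in> A then (s - f j) * g j else 0)"
    using A by (simp add: sum.distrib sum.delta')
  finally show ?thesis .
qed

lemma zz_upd: "zz d (\<theta>(i := (\<theta> i)(j := s))) i' x =
   (if i' = i then zz d \<theta> i x + (s - \<theta> i j) * xt d x j else zz d \<theta> i' x)"
proof (cases "i' = i")
  case True
  have "zz d (\<theta>(i := (\<theta> i)(j := s))) i' x = (\<Sum>k\<le>d. ((\<theta> i)(j := s)) k * xt d x k)"
    using True by (simp add: zz_def)
  also have "\<dots> = zz d \<theta> i x + (s - \<theta> i j) * xt d x j"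
    by (subst sum_upd) (auto simp: zz_def xt_def)
  finally show ?thesis using True by simp
qed (simp add: zz_def)

lemma net_upd: "i < 2 * p \<Longrightarrow> net p d h (\<theta>(i := (\<theta> i)(j := s))) x =
   net p d h \<theta> x + outw p i * (huber h (zz d \<theta> i x + (s - \<theta> i j) * xt d x j) - huber h (zz d \<theta> i x))"
proof -
  assume i: "i < 2 * p"
  have "net p d h (\<theta>(i := (\<theta> i)(j := s))) x = (\<Sum>k<2*p. outw p k * huber h (zz d \<theta> k x) +
     (if k = i then outw p i * (huber h (zz d \<theta> i x + (s - \<theta> i j) * xt d x j) - huber h (zz d \<theta> i x)) else 0))"
    unfolding net_zz zz_upd by (rule sum.cong) (auto simp: algebra_simps)
  also have "\<dots> = net p d h \<theta> x + outw p i * (huber h (zz d \<theta> i x + (s - \<theta> i j) * xt d x j) - huber h (zz d \<theta> i x))"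
    using i by (simp add: sum.distrib net_zz)
  finally show ?thesis .
qed

lemma dsummand:
  assumes h: "h > 0"
  shows "((\<lambda>v. ln (1 + exp (- y * (a + u * (huber h (b + (v - v0) * c) - huber h b)))))
     has_real_derivative (- qq (y * a) * y * u * hder h b * c)) (at v0)"
proof -
  have p: "0 < 1 + exp (- y * a)" by (simp add: add_pos_pos)
  show ?thesis
    by (rule derivative_eq_intros refl | simp add: h add_pos_pos)+
      (use p in \<open>simp add: qq_def field_simps\<close>)
qed

definition gr :: "nat \<Rightarrow> nat \<Rightarrow> nat \<Rightarrow> real \<Rightarrow> (nat \<Rightarrow> nat \<Rightarrow> real) \<Rightarrow> (nat \<Rightarrow> real)
    \<Rightarrow> (nat \<Rightarrow> nat \<Rightarrow> real) \<Rightarrow> nat \<Rightarrow> nat \<Rightarrow> real" where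
  "gr n p d h X Y \<theta> i j = (1 / real n) * (\<Sum>s<n. - qq (Y s * net p d h \<theta> (X s)) * Y s * outw p i
      * hder h (zz d \<theta> i (X s)) * xt d (X s) j)"

lemma partial_eq:
  assumes h: "h > 0" and i: "i < 2 * p"
  shows "partial (loss n p d h X Y) \<theta> i j = gr n p d h X Y \<theta> i j"
proof -
  define F where "F v = (1 / real n) * (\<Sum>s<n. ln (1 + exp (- (Y s) * (net p d h \<theta> (X s) + outw p i *
     (huber h (zz d \<theta> i (X s) + (v - \<theta> i j) * xt d (X s) j) - huber h (zz d \<theta> i (X s)))))))" for v
  have eq: "(\<lambda>v. loss n p d h X Y (\<theta>(i := (\<theta> i)(j := v)))) = F"
    by (rule ext) (simp add: loss_def F_def net_upd[OF i])
  have "(F has_real_derivative gr n p d h X Y \<theta> i j) (at (\<theta> i j))"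
    unfolding F_def gr_def
    by (intro DERIV_cmult DERIV_sum dsummand h)
  then show ?thesis unfolding partial_def eq by (rule DERIV_imp_deriv)
qed




lemma t2: assumes h: "h > 0" and 2: "a < 0" "0 \<le> b" "b \<le> h"
  shows "(huber h b - huber h a - hder h a * (b - a)) * (2 * h) = b * b"
  using 2 h by (simp add: huber_def hder_def power2_eq_square)
lemma t3: assumes h: "h > 0" and 2: "a < 0" "b > h"
  shows "(huber h b - huber h a - hder h a * (b - a)) * (2 * h) = 2 * b * h - h * h"
  using 2 h by (simp add: huber_def hder_def algebra_simps)
lemma t4: assumes h: "h > 0" and 2: "0 \<le> a" "a \<le> h" "b < 0"
  shows "(huber h b - huber h a - hder h a * (b - a)) * (2 * h) = a * a - 2 * a * b"
proof -
  have e0: "a / h * (b - a) * (2 * h) = 2 * a * (b - a)" using h by (simp add: field_simps)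
  have e1: "a\<^sup>2 / (2 * h) * (2 * h) = a\<^sup>2" using h by simp
  show ?thesis using 2 h by (simp add: huber_def hder_def left_diff_distrib e0 e1) (simp add: power2_eq_square algebra_simps)
qed
lemma t5: assumes h: "h > 0" and 2: "0 \<le> a" "a \<le> h" "0 \<le> b" "b \<le> h"
  shows "(huber h b - huber h a - hder h a * (b - a)) * (2 * h) = (b - a)\<^sup>2"
  using 2 h by (simp add: huber_def hder_def power2_eq_square algebra_simps diff_divide_distrib)
lemma t6: assumes h: "h > 0" and 2: "0 \<le> a" "a \<le> h" "b > h"
  shows "(huber h b - huber h a - hder h a * (b - a)) * (2 * h) = (b - a)\<^sup>2 - (b - h)\<^sup>2"
proof -
  have e0: "a / h * (b - a) * (2 * h) = 2 * a * (b - a)" using h by (simp add: field_simps)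
  have e1: "a / h * (b - a) * (2 * h) = 2 * a * (b - a)" "a\<^sup>2 / (2 * h) * (2 * h) = a\<^sup>2" "(b - h / 2) * (2 * h) = 2 * b * h - h * h" using h e0 by (simp_all add: algebra_simps)
  show ?thesis using 2 h by (simp add: huber_def hder_def left_diff_distrib e1) (simp add: power2_eq_square algebra_simps)
qed
lemma t7: assumes h: "h > 0" and 2: "a > h" "b < 0"
  shows "(huber h b - huber h a - hder h a * (b - a)) * (2 * h) = (h - b)\<^sup>2 - b\<^sup>2"
  using 2 h by (simp add: huber_def hder_def power2_eq_square algebra_simps)
lemma t8: assumes h: "h > 0" and 2: "a > h" "0 \<le> b" "b \<le> h"
  shows "(huber h b - huber h a - hder h a * (b - a)) * (2 * h) = (h - b)\<^sup>2"
  using 2 h by (simp add: huber_def hder_def power2_eq_square algebra_simps)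

lemma sq_mono_aux: "0 \<le> (x::real) \<Longrightarrow> x \<le> y \<Longrightarrow> x\<^sup>2 \<le> y\<^sup>2"
  by (simp add: power_mono)

lemma huber_taylor:
  assumes h: "h > 0"
  shows "\<bar>huber h b - huber h a - hder h a * (b - a)\<bar> * (2 * h) \<le> (b - a)\<^sup>2"
proof -
  define E where "E = (huber h b - huber h a - hder h a * (b - a)) * (2 * h)"
  have e: "\<bar>huber h b - huber h a - hder h a * (b - a)\<bar> * (2 * h) = \<bar>E\<bar>" using h by (simp add: abs_mult E_def)
  have sq: "(b - a)\<^sup>2 = b * b - 2 * a * b + a * a" by (simp add: power2_eq_square algebra_simps)
  have "- (b - a)\<^sup>2 \<le> E \<and> E \<le> (b - a)\<^sup>2"
  proof -
    consider "a < 0" "b < 0" | "a < 0" "0 \<le> b" "b \<le> h" | "a < 0" "b > h"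
      | "0 \<le> a" "a \<le> h" "b < 0" | "0 \<le> a" "a \<le> h" "0 \<le> b" "b \<le> h" | "0 \<le> a" "a \<le> h" "b > h"
      | "a > h" "b < 0" | "a > h" "0 \<le> b" "b \<le> h" | "a > h" "b > h" by linarith
    then show ?thesis
    proof cases
      case 1 then show ?thesis by (simp add: E_def huber_def hder_def)
    next
      case 2
      have E: "E = b * b" using t2[OF h 2] by (simp add: E_def)
      have "0 \<le> - 2 * a * b" using 2 by (simp add: mult_nonpos_nonneg)
      then show ?thesis unfolding E sq using zero_le_square[of a] zero_le_square[of b] by linarith
    next
      case 3
      have E: "E = 2 * b * h - h * h" using t3[OF h 3] by (simp add: E_def)
      have "b\<^sup>2 \<le> (b - a)\<^sup>2" using 3 h by (intro sq_mono_aux) auto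
      then have f1: "b * b \<le> (b - a)\<^sup>2" by (simp add: power2_eq_square)
      have "0 \<le> (b - h) * (b - h)" by simp
      then have f2: "0 \<le> b * b - 2 * b * h + h * h" by (simp add: algebra_simps)
      have "0 \<le> h * (b - h)" using 3 h by simp
      then have f3: "0 \<le> b * h - h * h" by (simp add: algebra_simps)
      have f4: "0 \<le> (b - a)\<^sup>2" by simp
      show ?thesis unfolding E using f1 f2 f3 f4 zero_le_square[of h] by (simp only: mult.assoc) linarith
    next
      case 4
      have E: "E = a * a - 2 * a * b" using t4[OF h 4] by (simp add: E_def)
      have "0 \<le> - 2 * a * b" using 4 by (simp add: mult_nonneg_nonpos)
      then show ?thesis unfolding E sq using zero_le_square[of a] zero_le_square[of b] by linarith
    next
      case 5
      have E: "E = (b - a)\<^sup>2" using t5[OF h 5] by (simp add: E_def)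
      then show ?thesis by simp
    next
      case 6
      have E: "E = (b - a)\<^sup>2 - (b - h)\<^sup>2" using t6[OF h 6] by (simp add: E_def)
      have "(b - h)\<^sup>2 \<le> (b - a)\<^sup>2" using 6 by (intro sq_mono_aux) auto
      then show ?thesis unfolding E using zero_le_power2[of "b - h"] by linarith
    next
      case 7
      have E: "E = (h - b)\<^sup>2 - b\<^sup>2" using t7[OF h 7] by (simp add: E_def)
      have "(h - b)\<^sup>2 \<le> (a - b)\<^sup>2" using 7 h by (intro sq_mono_aux) auto
      moreover have "(a - b)\<^sup>2 = (b - a)\<^sup>2" by (simp add: power2_commute)
      moreover have "b\<^sup>2 \<le> (h - b)\<^sup>2" using sq_mono_aux[of "-b" "h - b"] 7 h by simp
      ultimately show ?thesis unfolding E using zero_le_power2[of b] by linarith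
    next
      case 8
      have E: "E = (h - b)\<^sup>2" using t8[OF h 8] by (simp add: E_def)
      have "(h - b)\<^sup>2 \<le> (a - b)\<^sup>2" using 8 by (intro sq_mono_aux) auto
      moreover have "(a - b)\<^sup>2 = (b - a)\<^sup>2" by (simp add: power2_commute)
      ultimately show ?thesis unfolding E by simp
    next
      case 9
      then show ?thesis using h by (simp add: E_def huber_def hder_def)
    qed
  qed
  then show ?thesis unfolding e by (simp add: abs_le_iff)
qed

lemma hder_bounds: "h > 0 \<Longrightarrow> 0 \<le> hder h z" "h > 0 \<Longrightarrow> hder h z \<le> 1"
  by (auto simp: hder_def)

lemma huber_lip:
  assumes h: "h > 0"
  shows "\<bar>huber h b - huber h a\<bar> \<le> \<bar>b - a\<bar>"
proof -
  have D: "\<forall>x. DERIV (huber h) x :> hder h x" using huber_deriv[OF h] by blast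
  have *: "\<bar>huber h v - huber h u\<bar> \<le> \<bar>v - u\<bar>" if "u < v" for u v
  proof -
    have "\<exists>z>u. z < v \<and> huber h v - huber h u = (v - u) * hder h z"
      by (rule MVT2[OF that]) (rule huber_deriv[OF h])
    then obtain z where "huber h v - huber h u = (v - u) * hder h z" by blast
    then show ?thesis using hder_bounds[OF h, of z] that by (simp add: abs_mult)
  qed
  show ?thesis
    by (cases a b rule: linorder_cases) (use *[of a b] *[of b a] in \<open>auto simp: abs_minus_commute\<close>)
qed

lemma huber_homog:
  assumes h: "h > 0"
  shows "0 \<le> hder h z * z - huber h z \<and> hder h z * z - huber h z \<le> h / 2"
proof -
  consider "z < 0" | "0 \<le> z" "z \<le> h" | "z > h" by linarith
  then show ?thesis
  proof cases
    case 2
    have e: "hder h z * z - huber h z = z\<^sup>2 / (2 * h)"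
    proof -
      have "hder h z * z - huber h z = z / h * z - z\<^sup>2 / (2 * h)" using 2 h by (simp add: hder_def huber_def)
      also have "z / h * z = z\<^sup>2 / h" by (simp add: power2_eq_square)
      also have "z\<^sup>2 / h - z\<^sup>2 / (2 * h) = z\<^sup>2 / (2 * h)" using h by (simp add: field_simps)
      finally show ?thesis .
    qed
    have "z\<^sup>2 \<le> h\<^sup>2" using 2 by (intro sq_mono_aux) auto
    then have "z\<^sup>2 / (2 * h) \<le> h / 2" using h by (simp add: field_simps power2_eq_square)
    then show ?thesis unfolding e using h by simp
  qed (use h in \<open>auto simp: hder_def huber_def\<close>)
qed




definition N2 :: "nat \<Rightarrow> nat \<Rightarrow> (nat \<Rightarrow> nat \<Rightarrow> real) \<Rightarrow> real" where
  "N2 p d \<theta> = (\<Sum>i<2*p. \<Sum>j\<le>d. (\<theta> i j)\<^sup>2)"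

lemma N2_nonneg: "0 \<le> N2 p d \<theta>"
  unfolding N2_def by (intro sum_nonneg) auto

lemma frob_N2: "frob p d \<theta> = sqrt (N2 p d \<theta>)"
  unfolding frob_def N2_def ..

lemma exp_le_quad: assumes "x \<le> (1::real)" shows "exp x \<le> 1 + x + x\<^sup>2"
proof (cases "x \<ge> 0")
  case True then show ?thesis using exp_bound[of x] assms by simp
next
  case False
  have "1 - x \<le> exp (- x)" using exp_ge_add_one_self[of "-x"] by simp
  then have "exp x \<le> 1 / (1 - x)" using False by (simp add: exp_minus field_simps)
  also have "1 / (1 - x) \<le> 1 + x + x\<^sup>2"
  proof -
    have "1 \<le> (1 - x) * (1 + x + x\<^sup>2)"
    proof -
      have "(1 - x) * (1 + x + x\<^sup>2) = 1 - x * x\<^sup>2" by (simp add: algebra_simps power2_eq_square)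
      moreover have "x * x\<^sup>2 \<le> 0" using False by (simp add: mult_nonpos_nonneg)
      ultimately show ?thesis by simp
    qed
    then show ?thesis using False by (simp add: field_simps)
  qed
  finally show ?thesis .
qed

lemma qq_nonneg: "0 \<le> qq m" unfolding qq_def by (simp add: add_pos_pos less_imp_le)

lemma lg_pos: "0 < lg m" unfolding lg_def by (intro ln_gt_zero) simp

lemma qq_le_lg: "qq m \<le> lg m"
proof -
  define y where "y = exp (- m)"
  have y: "y > 0" by (simp add: y_def)
  have "ln (1 / (1 + y)) \<le> 1 / (1 + y) - 1" using y by (intro ln_le_minus_one) simp
  then have "- ln (1 + y) \<le> 1 / (1 + y) - 1" using y by (simp add: ln_div)
  moreover have "1 / (1 + y) - 1 = - (y / (1 + y))" using y by (simp add: field_simps)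
  ultimately show ?thesis unfolding qq_def lg_def y_def[symmetric] by simp
qed

lemma qq_ge_lg: "lg m / (1 + exp (- m)) \<le> qq m"
proof -
  have "ln (1 + exp (- m)) \<le> exp (- m)" by (intro ln_add_one_self_le_self) simp
  then show ?thesis unfolding qq_def lg_def by (intro divide_right_mono) (auto simp: add_pos_pos less_imp_le)
qed

lemma lg_step:
  assumes "- \<delta> \<le> 1"
  shows "lg (m + \<delta>) - lg m \<le> qq m * (- \<delta> + \<delta>\<^sup>2)"
proof -
  define y where "y = exp (- m)"
  have y: "y > 0" by (simp add: y_def)
  have e: "exp (- (m + \<delta>)) = y * exp (- \<delta>)" by (simp add: y_def exp_add[symmetric])
  have p: "0 < 1 + y * exp (- \<delta>)" using y by (simp add: add_pos_pos)
  have "lg (m + \<delta>) - lg m = ln ((1 + y * exp (- \<delta>)) / (1 + y))"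
    unfolding lg_def e y_def[symmetric] using y p by (subst ln_div) (auto intro: add_pos_pos)
  also have "(1 + y * exp (- \<delta>)) / (1 + y) = 1 + qq m * (exp (- \<delta>) - 1)"
    unfolding qq_def y_def[symmetric] using y p by (simp add: field_simps)
  also have "ln (1 + qq m * (exp (- \<delta>) - 1)) \<le> qq m * (exp (- \<delta>) - 1)"
  proof -
    have "0 < (1 + y * exp (- \<delta>)) / (1 + y)" using y by (simp add: add_pos_pos)
    then have "0 < 1 + qq m * (exp (- \<delta>) - 1)"
      unfolding qq_def y_def[symmetric] using y by (simp add: field_simps)
    then show ?thesis using ln_le_minus_one by fastforce
  qed
  also have "\<dots> \<le> qq m * (- \<delta> + \<delta>\<^sup>2)"
    using exp_le_quad[OF assms] qq_nonneg[of m] by (intro mult_left_mono) auto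
  finally show ?thesis .
qed

lemma cs_double:
  fixes f g :: "nat \<Rightarrow> nat \<Rightarrow> real"
  shows "(\<Sum>i<a. \<Sum>j\<le>b. f i j * g i j)\<^sup>2 \<le> (\<Sum>i<a. \<Sum>j\<le>b. (f i j)\<^sup>2) * (\<Sum>i<a. \<Sum>j\<le>b. (g i j)\<^sup>2)"
proof -
  have c: "(\<Sum>i<a. \<Sum>j\<le>b. F i j) = (\<Sum>x\<in>{..<a} \<times> {..b}. F (fst x) (snd x))" for F :: "nat \<Rightarrow> nat \<Rightarrow> real"
    by (simp add: sum.cartesian_product case_prod_beta)
  show ?thesis unfolding c by (rule Cauchy_Schwarz_ineq_sum)
qed

lemma cs_weighted:
  fixes q a :: "nat \<Rightarrow> real"
  assumes "\<And>s. s \<in> S \<Longrightarrow> 0 \<le> q s"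
  shows "(\<Sum>s\<in>S. q s * a s)\<^sup>2 \<le> (\<Sum>s\<in>S. q s) * (\<Sum>s\<in>S. q s * (a s)\<^sup>2)"
proof -
  have "(\<Sum>s\<in>S. q s * a s) = (\<Sum>s\<in>S. sqrt (q s) * (sqrt (q s) * a s))"
    using assms by (intro sum.cong) (auto simp: real_sqrt_mult_self mult.assoc[symmetric])
  also have "(\<dots>)\<^sup>2 \<le> (\<Sum>s\<in>S. (sqrt (q s))\<^sup>2) * (\<Sum>s\<in>S. (sqrt (q s) * a s)\<^sup>2)"
    by (rule Cauchy_Schwarz_ineq_sum)
  also have "\<dots> = (\<Sum>s\<in>S. q s) * (\<Sum>s\<in>S. q s * (a s)\<^sup>2)"
    using assms by (simp add: power_mult_distrib)
  finally show ?thesis .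
qed

lemma cs_ones:
  fixes e :: "nat \<Rightarrow> real"
  shows "(\<Sum>i<k. \<bar>e i\<bar>)\<^sup>2 \<le> real k * (\<Sum>i<k. (e i)\<^sup>2)"
  using Cauchy_Schwarz_ineq_sum[of "\<lambda>i. 1" "\<lambda>i. \<bar>e i\<bar>" "{..<k}"] by simp




context
  fixes n p d :: nat and X :: "nat \<Rightarrow> nat \<Rightarrow> real" and Y :: "nat \<Rightarrow> real"
  assumes n1: "1 \<le> n" and p1: "1 \<le> p" and data: "\<forall>s<n. (\<Sum>j<d. (X s j)\<^sup>2) = 1 \<and> Y s \<in> {-1, 1}"
begin

abbreviation "hh \<equiv> 1 / real p"
abbreviation "LL \<theta> \<equiv> loss n p d hh X Y \<theta>"
abbreviation "mm \<theta> s \<equiv> Y s * net p d hh \<theta> (X s)"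
abbreviation "gg \<theta> \<equiv> gr n p d hh X Y \<theta>"

lemma hh_pos: "hh > 0" using p1 by simp

lemma xt_sq: "s < n \<Longrightarrow> (\<Sum>j\<le>d. (xt d (X s) j)\<^sup>2) = 2"
proof -
  assume s: "s < n"
  have "(\<Sum>j\<le>d. (xt d (X s) j)\<^sup>2) = (\<Sum>j<d. (xt d (X s) j)\<^sup>2) + (xt d (X s) d)\<^sup>2"
    by (simp add: lessThan_Suc_atMost[symmetric])
  also have "(\<Sum>j<d. (xt d (X s) j)\<^sup>2) = (\<Sum>j<d. (X s j)\<^sup>2)" by (intro sum.cong) (auto simp: xt_def)
  finally show ?thesis using data s by (simp add: xt_def)
qed

lemma Y_sq: "s < n \<Longrightarrow> Y s * Y s = 1" using data by auto
lemma Y_abs: "s < n \<Longrightarrow> \<bar>Y s\<bar> = 1" using data by auto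
lemma outw_sq: "outw p i * outw p i = 1" by (simp add: outw_def)
lemma outw_abs: "\<bar>outw p i\<bar> = 1" by (simp add: outw_def)

lemma loss_lg: "LL \<theta> = (1 / real n) * (\<Sum>s<n. lg (mm \<theta> s))"
  unfolding loss_def lg_def by simp

lemma LL_pos: "LL \<theta> > 0"
proof -
  have "0 \<in> {..<n}" using n1 by simp
  then have "{..<n} \<noteq> {}" by blast
  then have "0 < (\<Sum>s<n. lg (mm \<theta> s))" using lg_pos by (intro sum_pos) auto
  then show ?thesis unfolding loss_lg using n1 by simp
qed

lemma sum_qq_le: "(1 / real n) * (\<Sum>s<n. qq (mm \<theta> s)) \<le> LL \<theta>"
  unfolding loss_lg using n1 by (intro mult_left_mono sum_mono qq_le_lg) auto

lemma lg_le_nL: "s < n \<Longrightarrow> lg (mm \<theta> s) \<le> real n * LL \<theta>"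
proof -
  assume s: "s < n"
  have "lg (mm \<theta> s) \<le> (\<Sum>s<n. lg (mm \<theta> s))"
    using s lg_pos by (intro member_le_sum) (auto intro: less_imp_le)
  then show ?thesis unfolding loss_lg using n1 by simp
qed

lemma gr_alt: "gg \<theta> i j = (1 / real n) * (\<Sum>s<n. qq (mm \<theta> s) *
   (- Y s * outw p i * hder hh (zz d \<theta> i (X s)) * xt d (X s) j))"
  unfolding gr_def by (simp add: algebra_simps)

lemma grad_bound: "N2 p d (gg \<theta>) \<le> 4 * real p * (LL \<theta>)\<^sup>2"
proof -
  define q where "q s = qq (mm \<theta> s)" for s
  define a where "a i j s = - Y s * outw p i * hder hh (zz d \<theta> i (X s)) * xt d (X s) j" for i j s
  define W where "W = (1 / real n) * (\<Sum>s<n. q s)"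
  have q0: "0 \<le> q s" for s by (simp add: q_def qq_nonneg)
  have W0: "0 \<le> W" unfolding W_def using q0 by (intro mult_nonneg_nonneg sum_nonneg) auto
  have WL: "W \<le> LL \<theta>" unfolding W_def q_def by (rule sum_qq_le)
  have a2: "(a i j s)\<^sup>2 \<le> (xt d (X s) j)\<^sup>2" if "s < n" for i j s
  proof -
    have "\<bar>a i j s\<bar> = hder hh (zz d \<theta> i (X s)) * \<bar>xt d (X s) j\<bar>"
      unfolding a_def using Y_abs[OF that] hder_bounds(1)[OF hh_pos] by (simp add: abs_mult outw_abs)
    also have "\<dots> \<le> \<bar>xt d (X s) j\<bar>" using hder_bounds[OF hh_pos] by (simp add: mult_left_le_one_le)
    finally show ?thesis by (simp add: abs_le_square_iff)
  qed
  have g2: "(gg \<theta> i j)\<^sup>2 \<le> W * ((1 / real n) * (\<Sum>s<n. q s * (xt d (X s) j)\<^sup>2))" for i j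
  proof -
    have "(gg \<theta> i j)\<^sup>2 = (1 / real n)\<^sup>2 * (\<Sum>s<n. q s * a i j s)\<^sup>2"
      unfolding gr_alt q_def a_def by (simp only: power_mult_distrib)
    also have "\<dots> \<le> (1 / real n)\<^sup>2 * ((\<Sum>s<n. q s) * (\<Sum>s<n. q s * (a i j s)\<^sup>2))"
      by (intro mult_left_mono cs_weighted q0) auto
    also have "\<dots> \<le> (1 / real n)\<^sup>2 * ((\<Sum>s<n. q s) * (\<Sum>s<n. q s * (xt d (X s) j)\<^sup>2))"
      using q0 a2 by (intro mult_left_mono sum_mono sum_nonneg mult_nonneg_nonneg) auto
    also have "\<dots> = W * ((1 / real n) * (\<Sum>s<n. q s * (xt d (X s) j)\<^sup>2))"
      unfolding W_def by (simp add: power2_eq_square)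
    finally show ?thesis .
  qed
  have "N2 p d (gg \<theta>) \<le> (\<Sum>i<2*p. \<Sum>j\<le>d. W * ((1 / real n) * (\<Sum>s<n. q s * (xt d (X s) j)\<^sup>2)))"
    unfolding N2_def by (intro sum_mono g2)
  also have "\<dots> = W * ((1 / real n) * (\<Sum>s<n. q s * (\<Sum>i<2*p. \<Sum>j\<le>d. (xt d (X s) j)\<^sup>2)))"
    by (simp add: sum_distrib_left sum_distrib_right sum.swap[of _ "{..<n}"] mult.assoc mult.left_commute)
  also have "\<dots> = W * ((1 / real n) * (\<Sum>s<n. q s * (2 * p * 2)))"
    using xt_sq by (simp add: mult.assoc)
  also have "\<dots> = W * ((1 / real n) * ((\<Sum>s<n. q s) * (2 * p * 2)))"
    by (simp only: sum_distrib_right)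
  also have "\<dots> = 4 * real p * W * W" unfolding W_def by (simp add: algebra_simps)
  also have "\<dots> \<le> 4 * real p * (LL \<theta>)\<^sup>2"
    using W0 WL by (simp add: power2_eq_square mult_mono mult.assoc)
  finally show ?thesis .
qed

lemma swap3: "(\<Sum>i\<in>A. \<Sum>j\<in>B. \<Sum>s\<in>C. (F i j s :: real)) = (\<Sum>s\<in>C. \<Sum>i\<in>A. \<Sum>j\<in>B. F i j s)"
proof -
  have "(\<Sum>i\<in>A. \<Sum>j\<in>B. \<Sum>s\<in>C. F i j s) = (\<Sum>i\<in>A. \<Sum>s\<in>C. \<Sum>j\<in>B. F i j s)"
    by (intro sum.cong refl sum.swap)
  also have "\<dots> = (\<Sum>s\<in>C. \<Sum>i\<in>A. \<Sum>j\<in>B. F i j s)" by (rule sum.swap)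
  finally show ?thesis .
qed

lemma margin_homog:
  assumes s: "s < n"
  shows "Y s * (\<Sum>i<2*p. outw p i * hder hh (zz d \<theta> i (X s)) * zz d \<theta> i (X s)) \<ge> mm \<theta> s - 1"
proof -
  define z where "z i = zz d \<theta> i (X s)" for i
  define r where "r i = hder hh (z i) * z i - huber hh (z i)" for i
  have r0: "0 \<le> r i" and r1: "r i \<le> hh / 2" for i using huber_homog[OF hh_pos, of "z i"] by (auto simp: r_def)
  have e: "Y s * (\<Sum>i<2*p. outw p i * hder hh (z i) * z i) = mm \<theta> s + (\<Sum>i<2*p. (Y s * outw p i) * r i)"
    unfolding net_zz z_def[symmetric] r_def by (simp add: sum_distrib_left sum.distrib[symmetric] algebra_simps)
  have "(\<Sum>i<2*p. (Y s * outw p i) * r i) \<ge> (\<Sum>i<2*p. - (hh / 2))"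
  proof (intro sum_mono)
    fix i
    have a: "\<bar>Y s * outw p i\<bar> = 1" using Y_abs[OF s] by (simp add: abs_mult outw_abs)
    have "- r i \<le> (Y s * outw p i) * r i"
    proof -
      have "\<bar>(Y s * outw p i) * r i\<bar> = r i" using a r0[of i] by (simp add: abs_mult)
      then show ?thesis by linarith
    qed
    then show "- (hh / 2) \<le> (Y s * outw p i) * r i" using r1[of i] by linarith
  qed
  moreover have "(\<Sum>i<2*p. - (hh / 2)) = -1" using p1 by simp
  ultimately show ?thesis unfolding z_def[symmetric] e by linarith
qed

lemma corr: "- (\<Sum>i<2*p. \<Sum>j\<le>d. gg \<theta> i j * \<theta> i j) \<ge> (1 / real n) * (\<Sum>s<n. qq (mm \<theta> s) * (mm \<theta> s - 1))"
proof -
  define q where "q s = qq (mm \<theta> s)" for s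
  have "(\<Sum>i<2*p. \<Sum>j\<le>d. gg \<theta> i j * \<theta> i j) = (\<Sum>i<2*p. \<Sum>j\<le>d. \<Sum>s<n.
      (1 / real n) * (q s * (- Y s * outw p i * hder hh (zz d \<theta> i (X s)) * xt d (X s) j)) * \<theta> i j)"
    unfolding gr_alt q_def by (simp add: sum_distrib_left sum_distrib_right)
  also have "\<dots> = (\<Sum>s<n. \<Sum>i<2*p. \<Sum>j\<le>d.
      (1 / real n) * (q s * (- Y s * outw p i * hder hh (zz d \<theta> i (X s)) * xt d (X s) j)) * \<theta> i j)"
    by (rule swap3)
  also have "\<dots> = (\<Sum>s<n. (1 / real n) * (q s * (- (Y s * (\<Sum>i<2*p. outw p i * hder hh (zz d \<theta> i (X s)) * zz d \<theta> i (X s))))))"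
  proof (intro sum.cong refl)
    fix s
    have "(\<Sum>j\<le>d. (1 / real n) * (q s * (- Y s * outw p i * hder hh (zz d \<theta> i (X s)) * xt d (X s) j)) * \<theta> i j)
       = (1 / real n) * (q s * (- (Y s * (outw p i * hder hh (zz d \<theta> i (X s)) * zz d \<theta> i (X s)))))" for i
    proof -
      have "(1 / real n) * (q s * (- (Y s * (outw p i * hder hh (zz d \<theta> i (X s)) * zz d \<theta> i (X s)))))
        = (\<Sum>j\<le>d. (1 / real n) * (q s * (- (Y s * (outw p i * hder hh (zz d \<theta> i (X s)) * (\<theta> i j * xt d (X s) j))))))"
        by (simp only: zz_def[of d \<theta> i "X s"] sum_distrib_left sum_negf[symmetric])
      then show ?thesis by (simp add: mult_ac)
    qed
    then show "(\<Sum>i<2*p. \<Sum>j\<le>d. (1 / real n) * (q s * (- Y s * outw p i * hder hh (zz d \<theta> i (X s)) * xt d (X s) j)) * \<theta> i j)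
      = (1 / real n) * (q s * (- (Y s * (\<Sum>i<2*p. outw p i * hder hh (zz d \<theta> i (X s)) * zz d \<theta> i (X s)))))"
      by (simp add: sum_distrib_left sum_negf)
  qed
  finally have eq: "- (\<Sum>i<2*p. \<Sum>j\<le>d. gg \<theta> i j * \<theta> i j) =
      (1 / real n) * (\<Sum>s<n. q s * (Y s * (\<Sum>i<2*p. outw p i * hder hh (zz d \<theta> i (X s)) * zz d \<theta> i (X s))))"
    by (simp add: sum_distrib_left sum_negf[symmetric])
  show ?thesis unfolding eq q_def[symmetric]
    using n1 margin_homog qq_nonneg unfolding q_def
    by (intro mult_left_mono sum_mono) auto
qed

lemma grad_sq_eq: "N2 p d (gg \<theta>) = (\<Sum>s<n. (1 / real n) * qq (mm \<theta> s) *
    (\<Sum>i<2*p. \<Sum>j\<le>d. gg \<theta> i j * (- Y s * outw p i * hder hh (zz d \<theta> i (X s)) * xt d (X s) j)))"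
proof -
  have "N2 p d (gg \<theta>) = (\<Sum>i<2*p. \<Sum>j\<le>d. gg \<theta> i j * gg \<theta> i j)"
    unfolding N2_def by (simp add: power2_eq_square)
  also have "\<dots> = (\<Sum>i<2*p. \<Sum>j\<le>d. \<Sum>s<n. gg \<theta> i j * ((1 / real n) * (qq (mm \<theta> s) *
      (- Y s * outw p i * hder hh (zz d \<theta> i (X s)) * xt d (X s) j))))"
    by (intro sum.cong refl) (simp add: gr_alt[of \<theta>] sum_distrib_left sum_distrib_right mult_ac)
  also have "\<dots> = (\<Sum>s<n. \<Sum>i<2*p. \<Sum>j\<le>d. gg \<theta> i j * ((1 / real n) * (qq (mm \<theta> s) *
      (- Y s * outw p i * hder hh (zz d \<theta> i (X s)) * xt d (X s) j))))"
    by (rule swap3)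
  also have "\<dots> = (\<Sum>s<n. (1 / real n) * qq (mm \<theta> s) *
    (\<Sum>i<2*p. \<Sum>j\<le>d. gg \<theta> i j * (- Y s * outw p i * hder hh (zz d \<theta> i (X s)) * xt d (X s) j)))"
    by (simp add: sum_distrib_left mult_ac)
  finally show ?thesis .
qed

lemma descent:
  assumes a0: "0 \<le> \<alpha>" and small: "real p * \<alpha> * LL \<theta> \<le> 1/30"
    and upd: "\<forall>i<2*p. \<forall>j\<le>d. \<theta>' i j = \<theta> i j - \<alpha> * gg \<theta> i j"
  shows "LL \<theta>' \<le> LL \<theta> - 5/6 * \<alpha> * N2 p d (gg \<theta>)"
proof -
  define G where "G = N2 p d (gg \<theta>)"
  define L where "L = LL \<theta>"
  define q where "q s = qq (mm \<theta> s)" for s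
  define z where "z i s = zz d \<theta> i (X s)" for i s
  define e where "e i s = - \<alpha> * (\<Sum>j\<le>d. gg \<theta> i j * xt d (X s) j)" for i s
  have q0: "0 \<le> q s" for s by (simp add: q_def qq_nonneg)
  have G0: "0 \<le> G" unfolding G_def by (rule N2_nonneg)
  have L0: "0 < L" unfolding L_def by (rule LL_pos)
  have GL: "G \<le> 4 * real p * L\<^sup>2" unfolding G_def L_def by (rule grad_bound)
  have zz': "zz d \<theta>' i (X s) = z i s + e i s" if i: "i < 2*p" for i s
  proof -
    have "zz d \<theta>' i (X s) = (\<Sum>j\<le>d. (\<theta> i j - \<alpha> * gg \<theta> i j) * xt d (X s) j)"
      unfolding zz_def using upd i by (intro sum.cong) auto
    then show ?thesis unfolding z_def e_def zz_def
      by (simp add: left_diff_distrib sum_subtractf sum_distrib_left mult.assoc sum_negf)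
  qed
  have net': "net p d hh \<theta>' (X s) = (\<Sum>i<2*p. outw p i * huber hh (z i s + e i s))" for s
    unfolding net_zz by (intro sum.cong refl) (simp add: zz')
  define \<delta> where "\<delta> s = mm \<theta>' s - mm \<theta> s" for s
  define R where "R i s = huber hh (z i s + e i s) - huber hh (z i s) - hder hh (z i s) * e i s" for i s
  have \<delta>_eq: "\<delta> s = Y s * (\<Sum>i<2*p. outw p i * (huber hh (z i s + e i s) - huber hh (z i s)))" for s
    unfolding \<delta>_def net' unfolding net_zz z_def by (simp add: sum_subtractf right_diff_distrib)
  have \<delta>_eq2: "\<delta> s = Y s * (\<Sum>i<2*p. outw p i * hder hh (z i s) * e i s) + Y s * (\<Sum>i<2*p. outw p i * R i s)" for s
  proof -
    have "(\<Sum>i<2*p. outw p i * (huber hh (z i s + e i s) - huber hh (z i s))) =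
      (\<Sum>i<2*p. outw p i * hder hh (z i s) * e i s) + (\<Sum>i<2*p. outw p i * R i s)"
      unfolding sum.distrib[symmetric] R_def by (intro sum.cong refl) (simp add: algebra_simps)
    then show ?thesis unfolding \<delta>_eq by (simp add: distrib_left)
  qed
  have R_le: "\<bar>R i s\<bar> \<le> real p / 2 * (e i s)\<^sup>2" for i s
  proof -
    have "\<bar>R i s\<bar> * (2 * hh) \<le> (e i s)\<^sup>2" using huber_taylor[OF hh_pos, of "z i s + e i s" "z i s"] by (simp add: R_def)
    then show ?thesis using p1 by (simp add: field_simps)
  qed
  have esq: "(\<Sum>i<2*p. (e i s)\<^sup>2) \<le> 2 * \<alpha>\<^sup>2 * G" if s: "s < n" for s
  proof -
    have "(e i s)\<^sup>2 \<le> \<alpha>\<^sup>2 * (2 * (\<Sum>j\<le>d. (gg \<theta> i j)\<^sup>2))" for i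
    proof -
      have "(e i s)\<^sup>2 = \<alpha>\<^sup>2 * (\<Sum>j\<le>d. gg \<theta> i j * xt d (X s) j)\<^sup>2" by (simp add: e_def power_mult_distrib)
      also have "\<dots> \<le> \<alpha>\<^sup>2 * ((\<Sum>j\<le>d. (gg \<theta> i j)\<^sup>2) * (\<Sum>j\<le>d. (xt d (X s) j)\<^sup>2))"
        by (intro mult_left_mono Cauchy_Schwarz_ineq_sum) auto
      finally show ?thesis using xt_sq[OF s] by (simp add: mult_ac)
    qed
    then have "(\<Sum>i<2*p. (e i s)\<^sup>2) \<le> (\<Sum>i<2*p. \<alpha>\<^sup>2 * (2 * (\<Sum>j\<le>d. (gg \<theta> i j)\<^sup>2)))" by (intro sum_mono)
    also have "\<dots> = 2 * \<alpha>\<^sup>2 * G" unfolding G_def N2_def by (simp add: sum_distrib_left mult_ac)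
    finally show ?thesis .
  qed
  have A: "- \<delta> s \<le> - (Y s * (\<Sum>i<2*p. outw p i * hder hh (z i s) * e i s)) + real p * \<alpha>\<^sup>2 * G" if s: "s < n" for s
  proof -
    have "\<bar>Y s * (\<Sum>i<2*p. outw p i * R i s)\<bar> \<le> (\<Sum>i<2*p. \<bar>R i s\<bar>)"
      using Y_abs[OF s] by (simp add: abs_mult outw_abs sum_abs[THEN order_trans])
    also have "\<dots> \<le> (\<Sum>i<2*p. real p / 2 * (e i s)\<^sup>2)" by (intro sum_mono R_le)
    also have "\<dots> = real p / 2 * (\<Sum>i<2*p. (e i s)\<^sup>2)" by (simp add: sum_distrib_left)
    also have "\<dots> \<le> real p / 2 * (2 * \<alpha>\<^sup>2 * G)" by (intro mult_left_mono esq s) auto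
    finally show ?thesis unfolding \<delta>_eq2 by (simp add: abs_le_iff)
  qed
  have B: "(\<delta> s)\<^sup>2 \<le> 4 * real p * \<alpha>\<^sup>2 * G" if s: "s < n" for s
  proof -
    have "\<bar>\<delta> s\<bar> \<le> (\<Sum>i<2*p. \<bar>e i s\<bar>)"
    proof -
      have "\<bar>\<delta> s\<bar> \<le> (\<Sum>i<2*p. \<bar>huber hh (z i s + e i s) - huber hh (z i s)\<bar>)"
        unfolding \<delta>_eq using Y_abs[OF s] by (simp add: abs_mult outw_abs sum_abs[THEN order_trans])
      also have "\<dots> \<le> (\<Sum>i<2*p. \<bar>e i s\<bar>)" using huber_lip[OF hh_pos] by (intro sum_mono) (metis add_diff_cancel_left')
      finally show ?thesis .
    qed
    then have "(\<delta> s)\<^sup>2 \<le> (\<Sum>i<2*p. \<bar>e i s\<bar>)\<^sup>2" by (simp add: abs_le_square_iff[symmetric] abs_of_nonneg sum_nonneg)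
    also have "\<dots> \<le> real (2*p) * (\<Sum>i<2*p. (e i s)\<^sup>2)" by (rule cs_ones)
    also have "\<dots> \<le> real (2*p) * (2 * \<alpha>\<^sup>2 * G)" by (intro mult_left_mono esq s) auto
    finally show ?thesis by (simp add: mult_ac)
  qed
  have pa: "real p * \<alpha> * L \<le> 1/30" using small by (simp add: L_def)
  have pa0: "0 \<le> real p * \<alpha> * L" using a0 L0 by simp
  have C: "4 * real p * \<alpha>\<^sup>2 * G \<le> 1"
  proof -
    have "4 * real p * \<alpha>\<^sup>2 * G \<le> 4 * real p * \<alpha>\<^sup>2 * (4 * real p * L\<^sup>2)"
      using GL by (intro mult_left_mono) auto
    also have "\<dots> = 16 * (real p * \<alpha> * L)\<^sup>2" by (simp add: power2_eq_square)
    also have "\<dots> \<le> 16 * (1/30)\<^sup>2" using pa pa0 by (intro mult_left_mono power_mono) auto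
    also have "(16::real) * (1/30)\<^sup>2 \<le> 1" by (simp add: power2_eq_square)
    finally show ?thesis .
  qed
  have step: "lg (mm \<theta>' s) - lg (mm \<theta> s) \<le> q s * (- (Y s * (\<Sum>i<2*p. outw p i * hder hh (z i s) * e i s))) + q s * (5 * real p * \<alpha>\<^sup>2 * G)"
    if s: "s < n" for s
  proof -
    have "(\<delta> s)\<^sup>2 \<le> 1" using B[OF s] C by linarith
    then have d1: "\<bar>\<delta> s\<bar> \<le> 1" by (simp only: abs_square_le_1)
    have "lg (mm \<theta>' s) - lg (mm \<theta> s) = lg (mm \<theta> s + \<delta> s) - lg (mm \<theta> s)" by (simp add: \<delta>_def)
    also have "\<dots> \<le> q s * (- \<delta> s + (\<delta> s)\<^sup>2)" unfolding q_def using d1 by (intro lg_step) auto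
    also have "\<dots> \<le> q s * (- (Y s * (\<Sum>i<2*p. outw p i * hder hh (z i s) * e i s)) + real p * \<alpha>\<^sup>2 * G + 4 * real p * \<alpha>\<^sup>2 * G)"
    proof (rule mult_left_mono)
      have "4 * real p * \<alpha>\<^sup>2 * G = 4 * (real p * \<alpha>\<^sup>2 * G)" by simp
      then show "- \<delta> s + (\<delta> s)\<^sup>2 \<le> - (Y s * (\<Sum>i<2*p. outw p i * hder hh (z i s) * e i s)) + real p * \<alpha>\<^sup>2 * G + 4 * real p * \<alpha>\<^sup>2 * G"
        using A[OF s] B[OF s] by linarith
    qed (rule q0)
    also have "\<dots> = q s * (- (Y s * (\<Sum>i<2*p. outw p i * hder hh (z i s) * e i s))) + q s * (5 * real p * \<alpha>\<^sup>2 * G)"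
      by (simp add: algebra_simps)
    finally show ?thesis .
  qed
  have ident: "(1 / real n) * (\<Sum>s<n. q s * (- (Y s * (\<Sum>i<2*p. outw p i * hder hh (z i s) * e i s)))) = - \<alpha> * G"
  proof -
    have "(1 / real n) * (\<Sum>s<n. q s * (- (Y s * (\<Sum>i<2*p. outw p i * hder hh (z i s) * e i s))))
      = - \<alpha> * (\<Sum>s<n. (1 / real n) * q s * (\<Sum>i<2*p. \<Sum>j\<le>d. gg \<theta> i j * (- Y s * outw p i * hder hh (z i s) * xt d (X s) j)))"
      unfolding e_def by (simp add: sum_distrib_left sum_negf mult_ac)
    also have "\<dots> = - \<alpha> * G" unfolding G_def grad_sq_eq q_def z_def ..
    finally show ?thesis .
  qed
  have "LL \<theta>' - LL \<theta> = (1 / real n) * (\<Sum>s<n. lg (mm \<theta>' s) - lg (mm \<theta> s))"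
    unfolding loss_lg by (simp add: sum_subtractf right_diff_distrib)
  also have "\<dots> \<le> (1 / real n) * (\<Sum>s<n. q s * (- (Y s * (\<Sum>i<2*p. outw p i * hder hh (z i s) * e i s))) + q s * (5 * real p * \<alpha>\<^sup>2 * G))"
    using step by (intro mult_left_mono sum_mono) auto
  also have "\<dots> = - \<alpha> * G + (5 * real p * \<alpha>\<^sup>2 * G) * ((1 / real n) * (\<Sum>s<n. q s))"
  proof -
    have "(\<Sum>s<n. q s * (5 * real p * \<alpha>\<^sup>2 * G)) = (\<Sum>s<n. q s) * (5 * real p * \<alpha>\<^sup>2 * G)"
      by (simp only: sum_distrib_right)
    then show ?thesis by (simp only: sum.distrib distrib_left ident) (simp add: mult_ac)
  qed
  also have "\<dots> \<le> - \<alpha> * G + (5 * real p * \<alpha>\<^sup>2 * G) * L"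
    unfolding q_def L_def using G0 a0 by (intro add_left_mono mult_left_mono sum_qq_le) auto
  also have "\<dots> = - \<alpha> * G * (1 - 5 * (real p * \<alpha> * L))" by (simp add: algebra_simps power2_eq_square)
  also have "\<dots> \<le> - \<alpha> * G * (5/6)"
  proof -
    have "0 \<le> \<alpha> * G" using a0 G0 by simp
    moreover have "5/6 \<le> 1 - 5 * (real p * \<alpha> * L)" using pa by simp
    ultimately have "\<alpha> * G * (5/6) \<le> \<alpha> * G * (1 - 5 * (real p * \<alpha> * L))" by (intro mult_left_mono)
    then show ?thesis by simp
  qed
  finally show ?thesis unfolding G_def by simp
qed

lemma abs_le_sqrt: "x\<^sup>2 \<le> y \<Longrightarrow> \<bar>x\<bar> \<le> sqrt (y::real)"
  using real_le_rsqrt[of "\<bar>x\<bar>" y] by simp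

lemma norm_step:
  assumes upd: "\<forall>i<2*p. \<forall>j\<le>d. \<theta>' i j = \<theta> i j - \<alpha> * gg \<theta> i j" and a0: "0 \<le> \<alpha>"
  shows "sqrt (N2 p d \<theta>') \<le> sqrt (N2 p d \<theta>) + \<alpha> * sqrt (N2 p d (gg \<theta>))"
proof -
  define A where "A = N2 p d \<theta>"
  define G where "G = N2 p d (gg \<theta>)"
  define S where "S = (\<Sum>i<2*p. \<Sum>j\<le>d. gg \<theta> i j * \<theta> i j)"
  have A0: "0 \<le> A" and G0: "0 \<le> G" unfolding A_def G_def by (rule N2_nonneg)+
  have "S\<^sup>2 \<le> G * A" unfolding S_def G_def A_def N2_def by (rule cs_double)
  then have "\<bar>S\<bar> \<le> sqrt (G * A)" by (rule abs_le_sqrt)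
  then have S: "- S \<le> sqrt A * sqrt G" by (simp add: real_sqrt_mult mult.commute)
  have "N2 p d \<theta>' = (\<Sum>i<2*p. \<Sum>j\<le>d. (\<theta> i j - \<alpha> * gg \<theta> i j)\<^sup>2)"
    unfolding N2_def using upd by (intro sum.cong refl) auto
  also have "\<dots> = (\<Sum>i<2*p. \<Sum>j\<le>d. (\<theta> i j)\<^sup>2 - 2 * \<alpha> * (gg \<theta> i j * \<theta> i j) + \<alpha>\<^sup>2 * (gg \<theta> i j)\<^sup>2)"
    by (intro sum.cong refl) (simp add: power2_eq_square algebra_simps)
  also have "\<dots> = A - 2 * \<alpha> * S + \<alpha>\<^sup>2 * G"
    unfolding A_def S_def G_def N2_def by (simp add: sum.distrib sum_subtractf sum_distrib_left)
  also have "\<dots> \<le> A + 2 * \<alpha> * (sqrt A * sqrt G) + \<alpha>\<^sup>2 * G"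
  proof -
    have "2 * \<alpha> * (- S) \<le> 2 * \<alpha> * (sqrt A * sqrt G)" using S a0 by (intro mult_left_mono) auto
    then have "- (2 * \<alpha> * S) \<le> 2 * \<alpha> * (sqrt A * sqrt G)" by simp
    then show ?thesis by linarith
  qed
  also have "\<dots> = (sqrt A + \<alpha> * sqrt G)\<^sup>2" using A0 G0 by (simp add: power2_eq_square algebra_simps)
  finally have "N2 p d \<theta>' \<le> (sqrt A + \<alpha> * sqrt G)\<^sup>2" .
  then have "sqrt (N2 p d \<theta>') \<le> sqrt ((sqrt A + \<alpha> * sqrt G)\<^sup>2)" by (rule real_sqrt_le_mono)
  also have "\<dots> = sqrt A + \<alpha> * sqrt G" using A0 G0 a0 by simp
  finally show ?thesis unfolding A_def G_def .
qed

lemma L_ln_sq: assumes "0 < L" "L \<le> (1::real)" shows "L * (ln (1 / L))\<^sup>2 \<le> 4 * exp (- 2)"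
proof -
  define y where "y = ln (1 / L)"
  have y0: "0 \<le> y" using assms by (simp add: y_def)
  have L: "L = exp (- y)" using assms by (simp add: y_def ln_div)
  have "y / 2 \<le> exp (y / 2 - 1)" using exp_ge_add_one_self[of "y / 2 - 1"] by simp
  then have "(y / 2)\<^sup>2 \<le> (exp (y / 2 - 1))\<^sup>2" using y0 by (intro power_mono) auto
  also have "(exp (y / 2 - 1))\<^sup>2 = exp (y - 2)" by (simp add: power2_eq_square exp_add[symmetric])
  finally have "y\<^sup>2 \<le> 4 * exp (y - 2)" by (simp add: power_divide)
  then have "exp (- y) * y\<^sup>2 \<le> exp (- y) * (4 * exp (y - 2))" by (intro mult_left_mono) auto
  also have "exp (- y) * (4 * exp (y - 2)) = 4 * exp (- 2)" by (simp add: exp_add[symmetric])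
  finally have "exp (- y) * y\<^sup>2 \<le> 4 * exp (- 2)" .
  moreover have "L * (ln (1 / L))\<^sup>2 = exp (- y) * y\<^sup>2" by (simp only: y_def[symmetric] L[symmetric])
  ultimately show ?thesis by simp
qed

lemma grad_lower:
  assumes n2: "2 \<le> n" and LL1: "LL \<theta> \<le> L1" and L1n: "L1 \<le> 1 / real n powr 100"
  shows "9/10 * LL \<theta> * ln (1 / LL \<theta>) \<le> sqrt (N2 p d \<theta>) * sqrt (N2 p d (gg \<theta>))"
proof -
  define L where "L = LL \<theta>"
  define lam where "lam = ln (1 / L)"
  have L0: "0 < L" unfolding L_def by (rule LL_pos)
  have nn: "0 < real n" using n2 by simp
  have ln2: "2/3 \<le> ln (2::real)" by (rule ln2_ge_two_thirds)
  have lnn: "ln 2 \<le> ln (real n)" using n2 by simp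
  have "L \<le> 1 / real n powr 100" using LL1 L1n unfolding L_def by simp
  moreover have pos: "0 < 1 / real n powr 100" using nn by simp
  ultimately have f1: "ln L \<le> ln (1 / real n powr 100)" using L0 by (subst ln_le_cancel_iff) auto
  have f2: "ln (1 / real n powr 100) = - ln (real n powr 100)" using nn by (subst ln_div) auto
  have f3: "ln (real n powr 100) = 100 * ln (real n)" using nn by (subst ln_powr) auto
  have f4: "lam = - ln L" unfolding lam_def using L0 by (simp add: ln_div)
  have lam1: "100 * ln (real n) \<le> lam" using f1 f2 f3 f4 by linarith
  have lam50: "50 \<le> lam" using lam1 lnn ln2 by linarith
  define eps where "eps = real n * L"
  have eps0: "0 < eps" using nn L0 by (simp add: eps_def)
  have "ln eps = ln (real n) - lam" unfolding eps_def lam_def using nn L0 by (simp add: ln_mult ln_div)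
  also have "\<dots> \<le> - 60" using lam1 lnn ln2 by linarith
  finally have "exp (ln eps) \<le> exp (- 60)" by simp
  then have "eps \<le> exp (- 60)" using eps0 by simp
  also have "exp (- 60) \<le> (1 / 50 :: real)"
  proof -
    have "61 \<le> exp (60::real)" using exp_ge_add_one_self[of 60] by simp
    then show ?thesis by (simp add: exp_minus field_simps)
  qed
  finally have eps50: "eps \<le> 1 / 50" .
  define q where "q s = qq (mm \<theta> s)" for s
  have each: "9/10 * lam * lg (mm \<theta> s) \<le> q s * (mm \<theta> s - 1)" if s: "s < n" for s
  proof -
    define m where "m = mm \<theta> s"
    define y where "y = exp (- m)"
    have y0: "0 < y" by (simp add: y_def)
    have le: "lg m \<le> eps" unfolding m_def eps_def L_def by (rule lg_le_nL[OF s])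
    have "ln (1 + y) \<le> eps" using le unfolding lg_def y_def .
    then have "exp (ln (1 + y)) \<le> exp eps" by simp
    then have "1 + y \<le> exp eps" using y0 by (simp add: add_pos_pos)
    also have "\<dots> \<le> 1 + eps + eps\<^sup>2" using eps0 eps50 by (intro exp_bound) auto
    also have "\<dots> \<le> 1 + 2 * eps" using eps0 eps50 by (simp add: power2_eq_square)
    finally have y2: "y \<le> 2 * eps" by simp
    have "ln y \<le> ln (2 * eps)" using y0 y2 by simp
    also have "ln (2 * eps) = ln 2 + ln (real n) - lam" unfolding eps_def lam_def using nn L0 by (simp add: ln_mult ln_div)
    finally have "- m \<le> ln 2 + ln (real n) - lam" by (simp add: y_def)
    moreover have "ln (2::real) \<le> 1" using ln_2_less_1 by simp
    ultimately have m1: "95/100 * lam \<le> m - 1" using lam1 lam50 by linarith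
    have qlg: "lg m / (1 + 2 * eps) \<le> q s"
    proof -
      have "lg m / (1 + 2 * eps) \<le> lg m / (1 + y)" using y2 y0 lg_pos[of m] by (intro divide_left_mono) auto
      also have "\<dots> \<le> q s" unfolding q_def m_def[symmetric] y_def using qq_ge_lg by simp
      finally show ?thesis .
    qed
    have "9/10 * lam * lg m \<le> (lg m / (1 + 2 * eps)) * (95/100 * lam)"
    proof -
      have "9/10 * (1 + 2 * eps) \<le> 95/100" using eps50 by simp
      then have "9/10 * (1 + 2 * eps) * (lam * lg m) \<le> 95/100 * (lam * lg m)"
        using lam50 lg_pos[of m] by (intro mult_right_mono) auto
      then show ?thesis using eps0 by (simp add: field_simps)
    qed
    also have "\<dots> \<le> q s * (m - 1)"
    proof -
      have q0: "0 \<le> q s" by (simp add: q_def qq_nonneg)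
      show ?thesis by (rule mult_mono[OF qlg m1 q0]) (use lam50 in simp)
    qed
    finally show ?thesis unfolding m_def .
  qed
  have "9/10 * L * lam = (1 / real n) * (\<Sum>s<n. 9/10 * lam * lg (mm \<theta> s))"
    unfolding L_def loss_lg by (simp add: sum_distrib_left mult_ac)
  also have "\<dots> \<le> (1 / real n) * (\<Sum>s<n. q s * (mm \<theta> s - 1))"
    using each nn by (intro mult_left_mono sum_mono) auto
  also have "\<dots> \<le> - (\<Sum>i<2*p. \<Sum>j\<le>d. gg \<theta> i j * \<theta> i j)" unfolding q_def by (rule corr)
  also have "\<dots> \<le> sqrt (N2 p d \<theta>) * sqrt (N2 p d (gg \<theta>))"
  proof -
    have "(\<Sum>i<2*p. \<Sum>j\<le>d. gg \<theta> i j * \<theta> i j)\<^sup>2 \<le> N2 p d (gg \<theta>) * N2 p d \<theta>"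
      unfolding N2_def by (rule cs_double)
    then have "\<bar>\<Sum>i<2*p. \<Sum>j\<le>d. gg \<theta> i j * \<theta> i j\<bar> \<le> sqrt (N2 p d (gg \<theta>) * N2 p d \<theta>)"
      by (rule abs_le_sqrt)
    then show ?thesis by (simp add: real_sqrt_mult mult.commute)
  qed
  finally show ?thesis unfolding L_def lam_def .
qed

end



lemma num_step:
  fixes L L' L1 lam lam1 Q1 Q2 \<alpha> s \<rho> \<rho>' \<rho>1 G tt :: real
  assumes L0: "0 < L" and L'0: "0 < L'" and L10: "0 < L1"
    and desc: "L' \<le> L - 5/6 * \<alpha> * s\<^sup>2"
    and alpha: "\<alpha> = Q1 * lam\<^sup>2" and Q1: "0 < Q1" and lam0: "0 < lam" and lam1: "0 < lam1"
    and lamdef: "lam = ln (1 / L)"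
    and glow: "9/10 * L * lam \<le> \<rho> * s" and s0: "0 \<le> s" and rho0: "0 \<le> \<rho>"
    and nstep: "\<rho>' \<le> \<rho> + \<alpha> * s"
    and inv1: "\<rho> * lam1\<^sup>2 \<le> \<rho>1 * lam\<^sup>2" and inv2: "(Q2 * tt + 1) / L1 \<le> 1 / L"
    and Q2: "Q2 \<le> 125 * Q1 * L1 * lam1 ^ 4 / (216 * \<rho>1\<^sup>2)" and rho1: "0 < \<rho>1"
  shows "L' \<le> L" "(Q2 * (tt + 1) + 1) / L1 \<le> 1 / L'" "\<rho>' * lam1\<^sup>2 \<le> \<rho>1 * (ln (1 / L'))\<^sup>2"
proof -
  have a0: "0 \<le> \<alpha>" using alpha Q1 by simp
  have as0: "0 \<le> \<alpha> * s\<^sup>2" using a0 by simp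
  show LL': "L' \<le> L" using desc as0 by linarith
  have Ll: "0 < L * lam" using L0 lam0 by simp
  have rs: "0 < \<rho> * s" using glow Ll by linarith
  then have rho: "0 < \<rho>" and sp: "0 < s" using rho0 s0 by (auto simp: zero_less_mult_iff)
  have r1: "1 / L' - 1 / L \<ge> (L - L') / L\<^sup>2"
  proof -
    have "1 / L' - 1 / L = (L - L') / (L * L')" using L0 L'0 by (simp add: field_simps)
    also have "(L - L') / (L * L') \<ge> (L - L') / (L * L)"
      using L0 L'0 LL' by (intro divide_left_mono mult_left_mono) auto
    finally show ?thesis by (simp add: power2_eq_square)
  qed
  have s2: "s\<^sup>2 \<ge> (81/100) * L\<^sup>2 * lam\<^sup>2 / \<rho>\<^sup>2"
  proof -
    have "9/10 * L * lam / \<rho> \<le> s" using glow rho by (simp add: field_simps)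
    then have "(9/10 * L * lam / \<rho>)\<^sup>2 \<le> s\<^sup>2" using Ll rho by (intro power_mono) auto
    then show ?thesis by (simp add: power_divide power_mult_distrib)
  qed
  have lr: "lam1 ^ 4 / \<rho>1\<^sup>2 \<le> lam ^ 4 / \<rho>\<^sup>2"
  proof -
    have "\<rho> \<le> \<rho>1 * lam\<^sup>2 / lam1\<^sup>2" using inv1 lam1 by (simp add: field_simps)
    then have "\<rho>\<^sup>2 \<le> (\<rho>1 * lam\<^sup>2 / lam1\<^sup>2)\<^sup>2" using rho by (intro power_mono) auto
    then have "\<rho>\<^sup>2 * lam1 ^ 4 \<le> \<rho>1\<^sup>2 * lam ^ 4" using lam1 by (simp add: field_simps power_mult_distrib power2_eq_square power4_eq_xxxx)
    then show ?thesis using rho rho1 by (simp add: field_simps)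
  qed
  have r2: "(L - L') / L\<^sup>2 \<ge> Q2 / L1"
  proof -
    have "(L - L') / L\<^sup>2 \<ge> (5/6 * \<alpha> * s\<^sup>2) / L\<^sup>2" using desc L0 by (intro divide_right_mono) auto
    moreover have "5/6 * \<alpha> * s\<^sup>2 \<ge> 5/6 * \<alpha> * ((81/100) * L\<^sup>2 * lam\<^sup>2 / \<rho>\<^sup>2)"
      using s2 a0 by (intro mult_left_mono) auto
    moreover have "(5/6 * \<alpha> * ((81/100) * L\<^sup>2 * lam\<^sup>2 / \<rho>\<^sup>2)) / L\<^sup>2 = 27/40 * Q1 * (lam ^ 4 / \<rho>\<^sup>2)"
      using L0 unfolding alpha by (simp add: field_simps power2_eq_square power4_eq_xxxx)
    moreover have "27/40 * Q1 * (lam ^ 4 / \<rho>\<^sup>2) \<ge> 27/40 * Q1 * (lam1 ^ 4 / \<rho>1\<^sup>2)"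
      using lr Q1 by (intro mult_left_mono) auto
    moreover have "Q2 / L1 \<le> 27/40 * Q1 * (lam1 ^ 4 / \<rho>1\<^sup>2)"
    proof -
      have "Q2 / L1 \<le> (125 * Q1 * L1 * lam1 ^ 4 / (216 * \<rho>1\<^sup>2)) / L1" using Q2 L10 by (intro divide_right_mono) auto
      also have "\<dots> = 125/216 * Q1 * (lam1 ^ 4 / \<rho>1\<^sup>2)" using L10 by (simp add: field_simps)
      also have "\<dots> \<le> 27/40 * Q1 * (lam1 ^ 4 / \<rho>1\<^sup>2)" using Q1 rho1 by (intro mult_right_mono) auto
      finally show ?thesis .
    qed
    moreover have "(5/6 * \<alpha> * s\<^sup>2) / L\<^sup>2 \<ge> (5/6 * \<alpha> * ((81/100) * L\<^sup>2 * lam\<^sup>2 / \<rho>\<^sup>2)) / L\<^sup>2"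
      using calculation(2) L0 by (intro divide_right_mono) auto
    ultimately show ?thesis by linarith
  qed
  show "(Q2 * (tt + 1) + 1) / L1 \<le> 1 / L'"
  proof -
    have "(Q2 * (tt + 1) + 1) / L1 = (Q2 * tt + 1) / L1 + Q2 / L1" by (simp add: add_divide_distrib[symmetric] algebra_simps)
    then show ?thesis using inv2 r1 r2 by linarith
  qed
  define \<delta> where "\<delta> = (L - L') / (L * lam)"
  have d0: "0 \<le> \<delta>" unfolding \<delta>_def using LL' Ll by simp
  have lam': "lam * (1 + \<delta>) \<le> ln (1 / L')"
  proof -
    have "ln (L / L') \<ge> 1 - L' / L"
    proof -
      have "ln (L' / L) \<le> L' / L - 1" using L0 L'0 by (intro ln_le_minus_one) simp
      moreover have "ln (L / L') = - ln (L' / L)" using L0 L'0 by (simp add: ln_div)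
      ultimately show ?thesis by linarith
    qed
    moreover have "ln (1 / L') = lam + ln (L / L')" unfolding lamdef using L0 L'0 by (simp add: ln_div)
    moreover have "lam * (1 + \<delta>) = lam + (1 - L' / L)" unfolding \<delta>_def using L0 lam0 by (simp add: field_simps)
    ultimately show ?thesis by linarith
  qed
  have as: "\<alpha> * s \<le> 2 * \<rho> * \<delta>"
  proof -
    have "2 * \<rho> * \<delta> \<ge> 2 * \<rho> * ((5/6 * \<alpha> * s\<^sup>2) / (L * lam))"
      unfolding \<delta>_def using desc Ll rho by (intro mult_left_mono divide_right_mono) auto
    moreover have "2 * \<rho> * ((5/6 * \<alpha> * s\<^sup>2) / (L * lam)) = 5/3 * (\<alpha> * s) * ((\<rho> * s) / (L * lam))"
      by (simp add: field_simps power2_eq_square)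
    moreover have "(\<rho> * s) / (L * lam) \<ge> 9/10" using glow Ll by (simp add: field_simps)
    moreover have "5/3 * (\<alpha> * s) * ((\<rho> * s) / (L * lam)) \<ge> 5/3 * (\<alpha> * s) * (9/10)"
      using calculation(3) a0 s0 by (intro mult_left_mono) auto
    moreover have "5/3 * (\<alpha> * s) * (9/10) \<ge> \<alpha> * s" using a0 s0 by simp
    ultimately show ?thesis by linarith
  qed
  have "\<rho>' * lam1\<^sup>2 \<le> (\<rho> * (1 + 2 * \<delta>)) * lam1\<^sup>2"
    using nstep as by (intro mult_right_mono) (auto simp: algebra_simps)
  also have "\<dots> = (\<rho> * lam1\<^sup>2) * (1 + 2 * \<delta>)" by simp
  also have "\<dots> \<le> (\<rho>1 * lam\<^sup>2) * (1 + 2 * \<delta>)" using inv1 d0 by (intro mult_right_mono) auto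
  also have "\<dots> \<le> \<rho>1 * (lam * (1 + \<delta>))\<^sup>2"
  proof -
    have "lam\<^sup>2 * (1 + 2 * \<delta>) \<le> lam\<^sup>2 * (1 + \<delta>)\<^sup>2" using d0 by (intro mult_left_mono) (auto simp: power2_eq_square algebra_simps)
    then show ?thesis using rho1 by (simp add: power_mult_distrib mult.assoc mult_left_mono)
  qed
  also have "\<dots> \<le> \<rho>1 * (ln (1 / L'))\<^sup>2"
    using lam' lam0 d0 rho1 by (intro mult_left_mono power_mono) auto
  finally show "\<rho>' * lam1\<^sup>2 \<le> \<rho>1 * (ln (1 / L'))\<^sup>2" .
qed

lemma main:
  fixes n p d :: nat and X :: "nat \<Rightarrow> nat \<Rightarrow> real" and Y :: "nat \<Rightarrow> real"
    and \<theta> :: "nat \<Rightarrow> nat \<Rightarrow> nat \<Rightarrow> real" and Q1 Q2 :: real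
  assumes n2: "2 \<le> n" and p1: "1 \<le> p" and data: "\<forall>s<n. (\<Sum>j<d. (X s j)\<^sup>2) = 1 \<and> Y s \<in> {-1, 1}"
    and Q1: "0 < Q1" and Q1le: "Q1 \<le> Qt1 p (loss n p d (1 / real p) X Y (\<theta> 1)) (frob p d (\<theta> 1))"
    and Q2: "0 < Q2" and Q2le: "Q2 \<le> Qt2 Q1 (loss n p d (1 / real p) X Y (\<theta> 1)) (frob p d (\<theta> 1))"
    and upd: "\<forall>t\<ge>1. \<forall>i<2*p. \<forall>j\<le>d. \<theta> (Suc t) i j = \<theta> t i j
        - Q1 * (ln (1 / loss n p d (1 / real p) X Y (\<theta> t)))\<^sup>2 * partial (loss n p d (1 / real p) X Y) (\<theta> t) i j"
    and small: "loss n p d (1 / real p) X Y (\<theta> 1) \<le> 1 / real n powr 100"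
  shows "\<forall>t\<ge>1. loss n p d (1 / real p) X Y (\<theta> t) \<le> loss n p d (1 / real p) X Y (\<theta> 1) / (Q2 * (real t - 1) + 1)"
proof -
  define L where "L = loss n p d (1 / real p) X Y"
  define g where "g = gr n p d (1 / real p) X Y"
  define L1 where "L1 = L (\<theta> 1)"
  define lam1 where "lam1 = ln (1 / L1)"
  define rho where "rho t = sqrt (N2 p d (\<theta> t))" for t
  have n1: "1 \<le> n" using n2 by simp
  have hpos: "0 < 1 / real p" using p1 by simp
  have Lpos: "0 < L \<theta>'" for \<theta>' unfolding L_def by (rule LL_pos[OF n1 p1 data])
  have L10: "0 < L1" unfolding L1_def by (rule Lpos)
  have npow: "1 < real n powr 100"
  proof -
    have "real n powr 100 = real n ^ 100" using n2 by (simp add: powr_numeral)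
    moreover have "1 < real n ^ 100" using n2 by (intro one_less_power) auto
    ultimately show ?thesis by simp
  qed
  have L1lt: "L1 < 1"
  proof -
    have "1 / real n powr 100 < 1" using npow by (simp only: divide_less_eq_1) auto
    then show ?thesis using small unfolding L1_def L_def by linarith
  qed
  have lam1: "0 < lam1" unfolding lam1_def using L10 L1lt by simp
  have Q1e: "Q1 \<le> exp 2 / (120 * real p)"
    using Q1le unfolding Qt1_def by (rule order_trans) (rule Min_le, auto)
  have upd': "\<theta> (Suc t) i j = \<theta> t i j - (Q1 * (ln (1 / L (\<theta> t)))\<^sup>2) * g (\<theta> t) i j"
    if "1 \<le> t" "i < 2 * p" "j \<le> d" for t i j
    using upd that partial_eq[OF hpos, of i p n d X Y "\<theta> t" j] unfolding L_def g_def by auto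
  have smallL: "L1 \<le> 1 / real n powr 100" using small unfolding L1_def L_def .
  have rho1: "0 < rho 1"
  proof -
    have "9/10 * L1 * lam1 \<le> rho 1 * sqrt (N2 p d (g (\<theta> 1)))"
      using grad_lower[OF n1 p1 data n2 _ smallL] unfolding L1_def lam1_def rho_def L_def g_def by simp
    moreover have "0 < 9/10 * L1 * lam1" using L10 lam1 by simp
    moreover have "0 \<le> rho 1" unfolding rho_def using N2_nonneg by simp
    ultimately show ?thesis by (metis less_eq_real_def mult_zero_left not_less order_trans)
  qed
  define P where "P t \<longleftrightarrow> L (\<theta> t) \<le> L1 \<and> (Q2 * (real t - 1) + 1) / L1 \<le> 1 / L (\<theta> t)
      \<and> rho t * lam1\<^sup>2 \<le> rho 1 * (ln (1 / L (\<theta> t)))\<^sup>2" for t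
  have "P t" if "1 \<le> t" for t
    using that
  proof (induction t rule: nat_induct_at_least)
    case base
    show ?case unfolding P_def L1_def lam1_def by simp
  next
    case (Suc t)
    have IH: "L (\<theta> t) \<le> L1" "(Q2 * (real t - 1) + 1) / L1 \<le> 1 / L (\<theta> t)"
      "rho t * lam1\<^sup>2 \<le> rho 1 * (ln (1 / L (\<theta> t)))\<^sup>2" using Suc.IH unfolding P_def by auto
    define Lt where "Lt = L (\<theta> t)"
    define lam where "lam = ln (1 / Lt)"
    define \<alpha> where "\<alpha> = Q1 * lam\<^sup>2"
    have Lt0: "0 < Lt" unfolding Lt_def by (rule Lpos)
    have "1 / L1 \<le> 1 / Lt" using Lt0 IH(1) unfolding Lt_def by (intro divide_left_mono) (auto intro: mult_pos_pos L10)
    then have lamge: "lam1 \<le> lam" unfolding lam_def lam1_def using Lt0 L10 by simp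
    have lam0: "0 < lam" using lamge lam1 by simp
    have a0: "0 \<le> \<alpha>" unfolding \<alpha>_def using Q1 by simp
    have Ltl: "Lt * lam\<^sup>2 \<le> 4 * exp (- 2)" unfolding lam_def using Lt0 IH(1) L1lt
      by (intro L_ln_sq[OF n1 p1 data]) (auto simp: Lt_def)
    have pa: "real p * \<alpha> * Lt \<le> 1/30"
    proof -
      have "real p * \<alpha> * Lt = real p * Q1 * (Lt * lam\<^sup>2)" unfolding \<alpha>_def by simp
      also have "\<dots> \<le> real p * (exp 2 / (120 * real p)) * (4 * exp (- 2))"
      proof (rule mult_mono)
        show "real p * Q1 \<le> real p * (exp 2 / (120 * real p))" using Q1e by (intro mult_left_mono) auto
        show "0 \<le> real p * (exp 2 / (120 * real p))" by simp
        show "0 \<le> Lt * lam\<^sup>2" using Lt0 by simp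
      qed (rule Ltl)
      also have "\<dots> = 1/30" using p1 by (simp add: exp_minus field_simps)
      finally show ?thesis .
    qed
    have updt: "\<forall>i<2*p. \<forall>j\<le>d. \<theta> (Suc t) i j = \<theta> t i j - \<alpha> * g (\<theta> t) i j"
      using upd' Suc.hyps unfolding \<alpha>_def lam_def Lt_def by auto
    have desc: "L (\<theta> (Suc t)) \<le> Lt - 5/6 * \<alpha> * N2 p d (g (\<theta> t))"
      using descent[OF n1 p1 data a0 _ updt[unfolded g_def]] pa unfolding L_def Lt_def g_def by simp
    have glow: "9/10 * Lt * lam \<le> rho t * sqrt (N2 p d (g (\<theta> t)))"
      using grad_lower[OF n1 p1 data n2 _ smallL] IH(1) unfolding Lt_def lam_def rho_def L_def g_def by simp
    have nstep: "rho (Suc t) \<le> rho t + \<alpha> * sqrt (N2 p d (g (\<theta> t)))"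
      using norm_step[OF n1 p1 data updt[unfolded g_def] a0] unfolding rho_def g_def by simp
    have G0: "0 \<le> N2 p d (g (\<theta> t))" by (rule N2_nonneg)
    have Q2': "Q2 \<le> 125 * Q1 * L1 * lam1 ^ 4 / (216 * (rho 1)\<^sup>2)"
      using Q2le unfolding Qt2_def frob_N2 L1_def lam1_def rho_def L_def by simp
    note ns = num_step[OF Lt0 Lpos[of "\<theta> (Suc t)"] L10 _ \<alpha>_def Q1 lam0 lam1 lam_def glow _ _ nstep IH(3)[folded Lt_def, folded lam_def]
       _ Q2' rho1, of "real t - 1"]
    have ns2: "(Q2 * (real t - 1) + 1) / L1 \<le> 1 / Lt" using IH(2) unfolding Lt_def .
    have r0: "0 \<le> rho t" unfolding rho_def using N2_nonneg by simp
    have desc': "L (\<theta> (Suc t)) \<le> Lt - 5/6 * \<alpha> * (sqrt (N2 p d (g (\<theta> t))))\<^sup>2" using desc G0 by simp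
    note res = ns[OF desc' real_sqrt_ge_zero[OF G0] r0 ns2]
    show ?case unfolding P_def using res IH(1) unfolding Lt_def by (auto simp: algebra_simps intro: order_trans)
  qed
  then show ?thesis
  proof (intro allI impI)
    fix t :: nat assume t: "1 \<le> t"
    have Pt: "(Q2 * (real t - 1) + 1) / L1 \<le> 1 / L (\<theta> t)" using \<open>\<And>t. 1 \<le> t \<Longrightarrow> P t\<close>[OF t] unfolding P_def by auto
    have pos: "0 < Q2 * (real t - 1) + 1" using Q2 t by (simp add: add_nonneg_pos)
    have "L (\<theta> t) \<le> L1 / (Q2 * (real t - 1) + 1)"
      using Pt pos L10 Lpos[of "\<theta> t"] by (simp add: field_simps)
    then show "loss n p d (1 / real p) X Y (\<theta> t) \<le> loss n p d (1 / real p) X Y (\<theta> 1) / (Q2 * (real t - 1) + 1)"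
      unfolding L_def L1_def .
  qed
qed

theorem theorem1:
  shows "\<exists>C1 > (0::real). \<forall>(n::nat) (p::nat) (d::nat) (X::nat \<Rightarrow> nat \<Rightarrow> real) (Y::nat \<Rightarrow> real)
            (\<theta>::nat \<Rightarrow> nat \<Rightarrow> nat \<Rightarrow> real) (Q1::real) (Q2::real).
      2 \<le> n \<longrightarrow> 1 \<le> p \<longrightarrow> 1 \<le> d \<longrightarrow>
      (\<forall>s<n. (\<Sum>j<d. (X s j)\<^sup>2) = 1 \<and> Y s \<in> {-1, 1}) \<longrightarrow>
      (let h = 1 / real p; L = loss n p d h X Y; L1 = L (\<theta> 1); V = frob p d (\<theta> 1) in
        0 < Q1 \<longrightarrow> Q1 \<le> Qt1 p L1 V \<longrightarrow> 0 < Q2 \<longrightarrow> Q2 \<le> Qt2 Q1 L1 V \<longrightarrow>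
        (\<forall>t\<ge>1. \<forall>i<2*p. \<forall>j\<le>d.
            \<theta> (Suc t) i j = \<theta> t i j - Q1 * (ln (1 / L (\<theta> t)))\<^sup>2 * partial L (\<theta> t) i j) \<longrightarrow>
        L1 \<le> 1 / real n powr (1 + C1) \<longrightarrow>
        (\<forall>t\<ge>1. L (\<theta> t) \<le> L1 / (Q2 * (real t - 1) + 1)))"
proof (rule exI[of _ 99], intro conjI allI impI)
  show "(0::real) < 99" by simp
  fix n p d :: nat and X :: "nat \<Rightarrow> nat \<Rightarrow> real" and Y :: "nat \<Rightarrow> real"
    and \<theta> :: "nat \<Rightarrow> nat \<Rightarrow> nat \<Rightarrow> real" and Q1 Q2 :: real
  assume n2: "2 \<le> n" and p1: "1 \<le> p" and "1 \<le> d"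
    and data: "\<forall>s<n. (\<Sum>j<d. (X s j)\<^sup>2) = 1 \<and> Y s \<in> {-1, 1}"
  show "let h = 1 / real p; L = loss n p d h X Y; L1 = L (\<theta> 1); V = frob p d (\<theta> 1) in
        0 < Q1 \<longrightarrow> Q1 \<le> Qt1 p L1 V \<longrightarrow> 0 < Q2 \<longrightarrow> Q2 \<le> Qt2 Q1 L1 V \<longrightarrow>
        (\<forall>t\<ge>1. \<forall>i<2*p. \<forall>j\<le>d.
            \<theta> (Suc t) i j = \<theta> t i j - Q1 * (ln (1 / L (\<theta> t)))\<^sup>2 * partial L (\<theta> t) i j) \<longrightarrow>
        L1 \<le> 1 / real n powr (1 + 99) \<longrightarrow>
        (\<forall>t\<ge>1. L (\<theta> t) \<le> L1 / (Q2 * (real t - 1) + 1))"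
    unfolding Let_def
  proof (intro impI)
    assume a: "0 < Q1" "Q1 \<le> Qt1 p (loss n p d (1 / real p) X Y (\<theta> 1)) (frob p d (\<theta> 1))"
      "0 < Q2" "Q2 \<le> Qt2 Q1 (loss n p d (1 / real p) X Y (\<theta> 1)) (frob p d (\<theta> 1))"
      "\<forall>t\<ge>1. \<forall>i<2*p. \<forall>j\<le>d. \<theta> (Suc t) i j = \<theta> t i j
        - Q1 * (ln (1 / loss n p d (1 / real p) X Y (\<theta> t)))\<^sup>2 * partial (loss n p d (1 / real p) X Y) (\<theta> t) i j"
      "loss n p d (1 / real p) X Y (\<theta> 1) \<le> 1 / real n powr (1 + 99)"
    have s: "loss n p d (1 / real p) X Y (\<theta> 1) \<le> 1 / real n powr 100" using a(6) by simp
    show "\<forall>t\<ge>1. loss n p d (1 / real p) X Y (\<theta> t) \<le> loss n p d (1 / real p) X Y (\<theta> 1) / (Q2 * (real t - 1) + 1)"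
      by (rule main[OF n2 p1 data a(1-5) s])
  qed
qed


end
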